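(* Let $G$ be a daisy cube and let $P=v_1,v_2,v_3,v_4$ be a path on four vertices in $G$. Then $v_1$ and $v_3$ have a common neighbour different from $v_2$, or $v_2$ and $v_4$ have a common neighbour different from $v_3$.
   Context: For $B=\{0,1\}$ order $B^n$ componentwise: $u\le v$ iff $u_i\le v_i$ for all $i$. The hypercube $Q_n$ has vertex set $B^n$, two strings adjacent iff they differ in exactly one position. For $X\subseteq B^n$, $Q_n(X)$ is the subgraph of $Q_n$ induced by $\{u\in B^n: u\le x\text{ for some }x\in X\}$; a daisy cube is a graph of the form $Q_n(X)$. *)

theory Defs
  imports Main
begin

text \<open>Binary strings of length n are bool lists of length n (False = 0, True = 1).\<close>

definition bits :: "nat \<Rightarrow> bool list set" where
  "bits n = {u. length u = n}"

definition bits_le :: "bool list \<Rightarrow> bool list \<Rightarrow> bool" where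
  "bits_le u v \<longleftrightarrow> length u = length v \<and> (\<forall>i<length u. u ! i \<longrightarrow> v ! i)"

definition hc_adj :: "bool list \<Rightarrow> bool list \<Rightarrow> bool" where
  "hc_adj u v \<longleftrightarrow> length u = length v \<and> card {i. i < length u \<and> u ! i \<noteq> v ! i} = 1"

text \<open>Vertex set of the daisy cube Q_n(X); its edges are those of Q_n (induced subgraph).\<close>
definition daisy_vertices :: "nat \<Rightarrow> bool list set \<Rightarrow> bool list set" where
  "daisy_vertices n X = {u \<in> bits n. \<exists>x\<in>X. bits_le u x}"

end

theory Submission
  imports Defs
begin


lemma hc_adj_flipI:
  assumes "i < length u" shows "hc_adj u (u[i := \<not> u ! i])"
proof -
  have "{k. k < length u \<and> u ! k \<noteq> u[i := \<not> u ! i] ! k} = {i}"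
    using assms by (auto simp: nth_list_update)
  then show ?thesis using assms by (simp add: hc_adj_def)
qed

lemma hc_adjE:
  assumes "hc_adj u v" obtains i where "i < length u" "v = u[i := \<not> u ! i]"
proof -
  from assms have len: "length u = length v"
    and c: "card {k. k < length u \<and> u ! k \<noteq> v ! k} = 1" by (auto simp: hc_adj_def)
  from c obtain i where S: "{k. k < length u \<and> u ! k \<noteq> v ! k} = {i}"
    by (auto simp: card_1_singleton_iff)
  then have i: "i < length u" "u ! i \<noteq> v ! i" by auto
  have "v = u[i := \<not> u ! i]"
  proof (rule nth_equalityI)
    show "length v = length (u[i := \<not> u ! i])" using len by simp
    fix k assume "k < length v"
    then show "v ! k = u[i := \<not> u ! i] ! k"
      using S i len by (cases "k = i") (auto simp: nth_list_update set_eq_iff)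
  qed
  then show ?thesis using that i by blast
qed

lemma hc_adj_sym: "hc_adj u v \<Longrightarrow> hc_adj v u"
proof -
  assume "hc_adj u v"
  moreover have "{i. i < length v \<and> v ! i \<noteq> u ! i} = {i. i < length u \<and> u ! i \<noteq> v ! i}"
    if "length u = length v" using that by auto
  ultimately show ?thesis unfolding hc_adj_def by (metis (no_types, lifting))
qed

lemma bits_le_trans: "bits_le a b \<Longrightarrow> bits_le b c \<Longrightarrow> bits_le a c"
  unfolding bits_le_def by auto

lemma daisy_down:
  assumes "u \<in> daisy_vertices n X" "bits_le w u" shows "w \<in> daisy_vertices n X"
  using assms unfolding daisy_vertices_def bits_def
  by (auto dest: bits_le_trans) (auto simp: bits_le_def)

lemma bits_le_False: "bits_le (u[i := False]) u"
  unfolding bits_le_def by (metis length_list_update nth_list_update_eq nth_list_update_neq)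

theorem lemma4p11:
  fixes n :: nat and X :: "bool list set" and v1 v2 v3 v4 :: "bool list"
  assumes "X \<subseteq> bits n"
    and "v1 \<in> daisy_vertices n X" and "v2 \<in> daisy_vertices n X"
    and "v3 \<in> daisy_vertices n X" and "v4 \<in> daisy_vertices n X"
    and "distinct [v1, v2, v3, v4]"
    and "hc_adj v1 v2" and "hc_adj v2 v3" and "hc_adj v3 v4"
  shows "(\<exists>w\<in>daisy_vertices n X. w \<noteq> v2 \<and> hc_adj v1 w \<and> hc_adj v3 w)
       \<or> (\<exists>w\<in>daisy_vertices n X. w \<noteq> v3 \<and> hc_adj v2 w \<and> hc_adj v4 w)"
proof -
  obtain i where i: "i < length v1" and e2: "v2 = v1[i := \<not> v1 ! i]" using assms(7) hc_adjE by blast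
  obtain j where j: "j < length v2" and e3: "v3 = v2[j := \<not> v2 ! j]" using assms(8) hc_adjE by blast
  obtain k where k: "k < length v3" and e4: "v4 = v3[k := \<not> v3 ! k]" using assms(9) hc_adjE by blast
  have ij: "i \<noteq> j" using assms(6) e2 e3 i by (auto simp: list_update_overwrite)
  have jk: "j \<noteq> k" using assms(6) e3 e4 j by (auto simp: list_update_overwrite)
  have l2: "length v2 = length v1" "length v3 = length v1" "length v4 = length v1"
    using e2 e3 e4 by auto
  show ?thesis
  proof (cases "v1 ! j \<or> \<not> v1 ! i")
    case True
    define w where "w = v1[j := \<not> v1 ! j]"
    have w3: "w = v3[i := \<not> v3 ! i]"
      unfolding w_def e3 e2 using ij i j l2
      by (intro nth_equalityI) (auto simp: nth_list_update)
    have "hc_adj v1 w" unfolding w_def using j l2 by (intro hc_adj_flipI) auto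
    moreover have "hc_adj v3 w" unfolding w3 using i l2 by (intro hc_adj_flipI) auto
    moreover have "w \<noteq> v2"
    proof
      assume "w = v2"
      then have "w ! i = v2 ! i" by simp
      then show False unfolding w_def e2 using ij i by (auto simp: nth_list_update)
    qed
    moreover have "w \<in> daisy_vertices n X"
    proof (cases "v1 ! j")
      case True
      then have "w = v1[j := False]" unfolding w_def by simp
      then show ?thesis using daisy_down[OF assms(2)] bits_le_False by metis
    next
      case False
      with \<open>v1 ! j \<or> \<not> v1 ! i\<close> have "\<not> v1 ! i" by simp
      then have "v3 ! i" unfolding e3 e2 using ij i by (auto simp: nth_list_update)
      then have "w = v3[i := False]" unfolding w3 by simp
      then show ?thesis using daisy_down[OF assms(4)] bits_le_False by metis
    qed
    ultimately show ?thesis by blast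
  next
    case False
    define w where "w = v2[k := \<not> v2 ! k]"
    have w4: "w = v4[j := \<not> v4 ! j]"
      unfolding w_def e4 e3 using jk k j l2
      by (intro nth_equalityI) (auto simp: nth_list_update)
    have "hc_adj v2 w" unfolding w_def using k l2 by (intro hc_adj_flipI) auto
    moreover have "hc_adj v4 w" unfolding w4 using j l2 by (intro hc_adj_flipI) auto
    moreover have "w \<noteq> v3"
    proof
      assume "w = v3"
      then have "w ! j = v3 ! j" by simp
      then show False unfolding w_def e3 using jk j by (auto simp: nth_list_update)
    qed
    moreover have "w \<in> daisy_vertices n X"
    proof -
      have "v4 ! j" unfolding e4 e3 e2 using False jk ij i j l2 by (auto simp: nth_list_update)
      then have "w = v4[j := False]" unfolding w4 by simp
      then show ?thesis using daisy_down[OF assms(5)] bits_le_False by metis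
    qed
    ultimately show ?thesis by blast
  qed
qed

end
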